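(* The expected number of rows of the (unshifted) Ferrers diagram underlying a uniformly random type-B permutation tableau of size $n$, i.e. the expected number of south steps on its boundary, equals $\dfrac{n+1}{4}$.
   Context: A Ferrers diagram is a left-justified array of cells whose row lengths weakly decrease from top to bottom (rows of length $0$ are allowed). Its half-perimeter is the number of rows plus the number of columns. Its southeast boundary, traversed from the northeast corner to the southwest corner, consists of $n$ unit steps, each south or west; south steps correspond to rows and west steps to columns. If the diagram has $c$ columns, the shifted Ferrers diagram is obtained by inserting $c$ new left-justified rows above it, of lengths $c,c-1,\dots,1$ from top to bottom; the rightmost cell of each inserted row is a diagonal cell. A type-B permutation tableau of size $n$ is a filling of a shifted Ferrers diagram of half-perimeter $n$ with $0$'s and $1$'s such that: (1) every column contains at least one $1$; (2) no $0$ has both a $1$ above it in its column and a $1$ to its left in its row; (3) if a diagonal cell contains $0$ then every cell of its row contains $0$. Only the rows of the original (unshifted) Ferrers diagram are counted, not the inserted rows. Let $\mathcal{B}_n$ be the set of such tableaux with the uniform probability measure $\mathbb{P}_n$ and expectation $\mathbb{E}_n$. *)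

theory Defs
  imports "HOL-Probability.Probability"
begin

text \<open>
  A Ferrers diagram of half-perimeter n is encoded by its southeast
  boundary word w (length n), read from the northeast corner to the southwest
  corner; w ! i = True means step i is a south step (a row), False a west
  step (a column).  Rows of the unshifted diagram are labelled Inl a (a the
  position of its south step), columns by the position b of their west step.
  Inserted (staircase) rows are labelled Inr b, where b is the column of the
  row's diagonal cell (Inr b, b); that row contains the columns b' \<ge> b.
  Column b'' lies to the left of column b' iff b' < b''.
\<close>

type_synonym brow = "nat + nat"
type_synonym bcell = "brow \<times> nat"

definition south_steps :: "bool list \<Rightarrow> nat" where
  "south_steps w = length (filter id w)"

definition shifted_cells :: "bool list \<Rightarrow> bcell set" where
  "shifted_cells w =
     {(Inl a, b) | a b. a < b \<and> b < length w \<and> w ! a \<and> \<not> w ! b}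
   \<union> {(Inr b, b') | b b'. b \<le> b' \<and> b' < length w \<and> \<not> w ! b \<and> \<not> w ! b'}"

text \<open>All inserted rows lie above all original rows; original rows are ordered by the
  position of their south step; within each column the diagonal cell is the
  topmost inserted cell (the standard type-B shifted diagram).\<close>

fun row_above :: "brow \<Rightarrow> brow \<Rightarrow> bool" where
  "row_above (Inr b) (Inr b') = (b' < b)"
| "row_above (Inr b) (Inl a) = True"
| "row_above (Inl a) (Inr b) = False"
| "row_above (Inl a) (Inl a') = (a < a')"

text \<open>A filling is given by the set T of cells containing 1.\<close>

definition is_typeB_tableau :: "bool list \<Rightarrow> bcell set \<Rightarrow> bool" where
  "is_typeB_tableau w T \<longleftrightarrow>
     T \<subseteq> shifted_cells w
   \<and> (\<forall>b < length w. \<not> w ! b \<longrightarrow> (\<exists>r. (r, b) \<in> T))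
   \<and> (\<forall>r b. (r, b) \<in> shifted_cells w - T \<longrightarrow>
         \<not> ((\<exists>r'. (r', b) \<in> T \<and> row_above r' r) \<and> (\<exists>b''. (r, b'') \<in> T \<and> b < b'')))
   \<and> (\<forall>b. (Inr b, b) \<in> shifted_cells w \<and> (Inr b, b) \<notin> T \<longrightarrow>
         (\<forall>b'. (Inr b, b') \<notin> T))"

definition typeB_tableaux :: "nat \<Rightarrow> (bool list \<times> bcell set) set" where
  "typeB_tableaux n = {(w, T). length w = n \<and> is_typeB_tableau w T}"

end

theory Submission
  imports Defs
begin

definition is_row :: "bool list \<Rightarrow> brow \<Rightarrow> bool" where
  "is_row w r = (case r of Inl a \<Rightarrow> a < length w \<and> w ! a | Inr b \<Rightarrow> b < length w \<and> \<not> w ! b)"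

definition free :: "bool list \<Rightarrow> bcell set \<Rightarrow> brow set" where
  "free w T = {r. is_row w r
     \<and> (\<forall>b. (r, b) \<in> shifted_cells w - T \<longrightarrow> \<not> (\<exists>r'. (r', b) \<in> T \<and> row_above r' r))
     \<and> (\<forall>b. r = Inr b \<longrightarrow> (Inr b, b) \<in> T)}"

definition col :: "nat \<Rightarrow> brow set \<Rightarrow> bcell set" where
  "col n R = (\<lambda>r. (r, n)) ` R"

lemma mem_cells: "(r, b) \<in> shifted_cells w \<longleftrightarrow> b < length w \<and> \<not> w ! b \<and>
   (case r of Inl a \<Rightarrow> a < b \<and> w ! a | Inr c \<Rightarrow> c \<le> b \<and> \<not> w ! c)"
  by (cases r) (auto simp: shifted_cells_def)

lemma cells_mem: "(r, b) \<in> shifted_cells w \<Longrightarrow> b < length w \<and> is_row w r"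
  by (cases r) (auto simp: mem_cells is_row_def)

lemma cells_True: "shifted_cells (w @ [True]) = shifted_cells w"
proof (rule set_eqI)
  fix x :: bcell
  obtain r b where x: "x = (r, b)" by (cases x)
  show "x \<in> shifted_cells (w @ [True]) \<longleftrightarrow> x \<in> shifted_cells w"
    unfolding x mem_cells
    by (cases r) (auto simp: nth_append less_Suc_eq)
qed

lemma cells_False: "shifted_cells (w @ [False]) = shifted_cells w \<union> {(r, length w) | r. r = Inr (length w) \<or> is_row w r}"
proof (rule set_eqI)
  fix x :: bcell
  obtain r b where x: "x = (r, b)" by (cases x)
  show "x \<in> shifted_cells (w @ [False]) \<longleftrightarrow> x \<in> shifted_cells w \<union> {(r, length w) | r. r = Inr (length w) \<or> is_row w r}"
    unfolding x by (cases r) (auto simp: mem_cells nth_append less_Suc_eq is_row_def)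
qed

lemma is_row_True: "is_row (w @ [True]) r \<longleftrightarrow> is_row w r \<or> r = Inl (length w)"
  by (cases r) (auto simp: is_row_def nth_append less_Suc_eq)

lemma is_row_False: "is_row (w @ [False]) r \<longleftrightarrow> is_row w r \<or> r = Inr (length w)"
  by (cases r) (auto simp: is_row_def nth_append less_Suc_eq)

lemma not_row_len: "\<not> is_row w (Inl (length w))" "\<not> is_row w (Inr (length w))"
  by (auto simp: is_row_def)

lemma typeB_True: "is_typeB_tableau (w @ [True]) T \<longleftrightarrow> is_typeB_tableau w T"
proof -
  have "(\<forall>b < length (w @ [True]). \<not> (w @ [True]) ! b \<longrightarrow> (\<exists>r. (r, b) \<in> T))
      \<longleftrightarrow> (\<forall>b < length w. \<not> w ! b \<longrightarrow> (\<exists>r. (r, b) \<in> T))"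
    by (auto simp: nth_append less_Suc_eq)
  then show ?thesis unfolding is_typeB_tableau_def cells_True by simp
qed

lemma typeB_sub: "is_typeB_tableau w T \<Longrightarrow> T \<subseteq> shifted_cells w"
  by (simp add: is_typeB_tableau_def)

lemma typeB_False_intro:
  assumes T: "is_typeB_tableau w T" and R: "R \<subseteq> insert (Inr (length w)) (free w T)" "R \<noteq> {}"
  shows "is_typeB_tableau (w @ [False]) (T \<union> col (length w) R)"
proof -
  let ?n = "length w"
  let ?T = "T \<union> col ?n R"
  have Tc: "T \<subseteq> shifted_cells w" using T by (simp add: is_typeB_tableau_def)
  have Tlt: "\<And>r b. (r, b) \<in> T \<Longrightarrow> b < ?n \<and> is_row w r" using Tc cells_mem by blast
  have Rrow: "\<And>r. r \<in> R \<Longrightarrow> r = Inr ?n \<or> r \<in> free w T" using R by blast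
  have c1: "?T \<subseteq> shifted_cells (w @ [False])"
    using Tc Rrow by (auto simp: cells_False col_def free_def)
  have c2: "\<forall>b < length (w @ [False]). \<not> (w @ [False]) ! b \<longrightarrow> (\<exists>r. (r, b) \<in> ?T)"
  proof (intro allI impI)
    fix b assume b: "b < length (w @ [False])" "\<not> (w @ [False]) ! b"
    show "\<exists>r. (r, b) \<in> ?T"
    proof (cases "b < ?n")
      case True
      then have "\<not> w ! b" using b by (simp add: nth_append)
      then obtain r where "(r, b) \<in> T" using T True by (auto simp: is_typeB_tableau_def)
      then show ?thesis by blast
    next
      case False
      then have "b = ?n" using b by simp
      moreover obtain r where "r \<in> R" using R by blast
      ultimately show ?thesis by (auto simp: col_def)
    qed
  qed
  have c3: "\<forall>r b. (r, b) \<in> shifted_cells (w @ [False]) - ?T \<longrightarrow>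
         \<not> ((\<exists>r'. (r', b) \<in> ?T \<and> row_above r' r) \<and> (\<exists>b''. (r, b'') \<in> ?T \<and> b < b''))"
  proof (intro allI impI notI)
    fix r b
    assume rb: "(r, b) \<in> shifted_cells (w @ [False]) - ?T"
      and h: "(\<exists>r'. (r', b) \<in> ?T \<and> row_above r' r) \<and> (\<exists>b''. (r, b'') \<in> ?T \<and> b < b'')"
    from h obtain r' b'' where r': "(r', b) \<in> ?T" "row_above r' r" and b'': "(r, b'') \<in> ?T" "b < b''"
      by blast
    have b''le: "b'' \<le> ?n" using b'' Tlt by (auto simp: col_def dest!: Tlt)
    then have bn: "b < ?n" using b'' by simp
    then have rbw: "(r, b) \<in> shifted_cells w - T" using rb by (auto simp: cells_False col_def)
    have r'T: "(r', b) \<in> T" using r' bn by (auto simp: col_def)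
    show False
    proof (cases "b'' < ?n")
      case True
      then have "(r, b'') \<in> T" using b'' by (auto simp: col_def)
      then show ?thesis using T rbw r'T r'(2) b''(2) unfolding is_typeB_tableau_def by blast
    next
      case False
      then have "r \<in> R" using b'' b''le by (auto simp: col_def dest: Tlt)
      moreover have "is_row w r" using rbw cells_mem by blast
      ultimately have "r \<in> free w T" using Rrow not_row_len by blast
      then show False using rbw r'T r'(2) unfolding free_def by blast
    qed
  qed
  have c4: "\<forall>b. (Inr b, b) \<in> shifted_cells (w @ [False]) \<and> (Inr b, b) \<notin> ?T \<longrightarrow>
         (\<forall>b'. (Inr b, b') \<notin> ?T)"
  proof (intro allI impI notI)
    fix b b'
    assume a: "(Inr b, b) \<in> shifted_cells (w @ [False]) \<and> (Inr b, b) \<notin> ?T" and b': "(Inr b, b') \<in> ?T"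
    show False
    proof (cases "b < ?n")
      case True
      then have bw: "(Inr b, b) \<in> shifted_cells w" "(Inr b, b) \<notin> T" using a by (auto simp: cells_False col_def)
      show False
      proof (cases "(Inr b, b') \<in> T")
        case True
        then show False using T bw unfolding is_typeB_tableau_def by blast
      next
        case False
        then have "Inr b \<in> R" using b' by (auto simp: col_def)
        then have "Inr b \<in> free w T" using Rrow \<open>b < ?n\<close> by auto
        then show False using bw unfolding free_def by blast
      qed
    next
      case False
      then have "b = ?n" using a cells_mem[of "Inr b" b "w @ [False]"] by simp
      then have "b' = ?n" using b' by (auto simp: col_def not_row_len dest!: Tlt)
      then show False using a b' \<open>b = ?n\<close> by simp
    qed
  qed
  show ?thesis unfolding is_typeB_tableau_def using c1 c2 c3 c4 by blast
qed

lemma typeB_False_elim: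
  assumes T': "is_typeB_tableau (w @ [False]) T'"
  defines "T \<equiv> {c \<in> T'. snd c < length w}" and "R \<equiv> {r. (r, length w) \<in> T'}"
  shows "T' = T \<union> col (length w) R" "is_typeB_tableau w T"
    "R \<subseteq> insert (Inr (length w)) (free w T)" "R \<noteq> {}"
proof -
  let ?n = "length w"
  have T'c: "T' \<subseteq> shifted_cells (w @ [False])" using T' by (simp add: is_typeB_tableau_def)
  have T'le: "\<And>r b. (r, b) \<in> T' \<Longrightarrow> b \<le> ?n" using T'c cells_mem by fastforce
  have colT': "\<And>b. b \<le> ?n \<Longrightarrow> \<not> (w @ [False]) ! b \<Longrightarrow> \<exists>r. (r, b) \<in> T'"
  proof -
    fix b assume "b \<le> ?n" "\<not> (w @ [False]) ! b"
    moreover have "\<forall>b<length (w @ [False]). \<not> (w @ [False]) ! b \<longrightarrow> (\<exists>r. (r, b) \<in> T')"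
      using T' unfolding is_typeB_tableau_def by blast
    ultimately show "\<exists>r. (r, b) \<in> T'" by simp
  qed
  show eq: "T' = T \<union> col ?n R"
  proof (rule set_eqI)
    fix x :: bcell
    obtain r b where x: "x = (r, b)" by (cases x)
    show "x \<in> T' \<longleftrightarrow> x \<in> T \<union> col ?n R"
      unfolding x T_def R_def col_def using T'le[of r b] by auto
  qed
  have TT': "T \<subseteq> T'" by (auto simp: T_def)
  have Tc: "T \<subseteq> shifted_cells w"
  proof
    fix x assume "x \<in> T"
    then show "x \<in> shifted_cells w" using T'c by (auto simp: T_def cells_False)
  qed
  have c2: "\<forall>b < ?n. \<not> w ! b \<longrightarrow> (\<exists>r. (r, b) \<in> T)"
  proof (intro allI impI)
    fix b assume b: "b < ?n" "\<not> w ! b"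
    then have "\<not> (w @ [False]) ! b" by (simp add: nth_append)
    then obtain r where "(r, b) \<in> T'" using colT' b by fastforce
    then show "\<exists>r. (r, b) \<in> T" using b by (auto simp: T_def)
  qed
  have c3: "\<forall>r b. (r, b) \<in> shifted_cells w - T \<longrightarrow>
         \<not> ((\<exists>r'. (r', b) \<in> T \<and> row_above r' r) \<and> (\<exists>b''. (r, b'') \<in> T \<and> b < b''))"
  proof (intro allI impI)
    fix r b assume rb: "(r, b) \<in> shifted_cells w - T"
    then have "b < ?n" using cells_mem by blast
    then have "(r, b) \<in> shifted_cells (w @ [False]) - T'" using rb by (auto simp: cells_False T_def)
    then show "\<not> ((\<exists>r'. (r', b) \<in> T \<and> row_above r' r) \<and> (\<exists>b''. (r, b'') \<in> T \<and> b < b''))"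
      using T' TT' unfolding is_typeB_tableau_def by blast
  qed
  have c4: "\<forall>b. (Inr b, b) \<in> shifted_cells w \<and> (Inr b, b) \<notin> T \<longrightarrow> (\<forall>b'. (Inr b, b') \<notin> T)"
  proof (rule allI, rule impI)
    fix b assume a: "(Inr b, b) \<in> shifted_cells w \<and> (Inr b, b) \<notin> T"
    then have "b < ?n" using cells_mem by blast
    then have "(Inr b, b) \<in> shifted_cells (w @ [False]) \<and> (Inr b, b) \<notin> T'"
      using a by (auto simp: cells_False T_def)
    then show "\<forall>b'. (Inr b, b') \<notin> T" using T' TT' unfolding is_typeB_tableau_def by blast
  qed
  show typB: "is_typeB_tableau w T" unfolding is_typeB_tableau_def using Tc c2 c3 c4 by blast
  show "R \<noteq> {}"
  proof -
    have "\<not> (w @ [False]) ! ?n" by simp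
    then obtain r where "(r, ?n) \<in> T'" using colT' by blast
    then show ?thesis by (auto simp: R_def)
  qed
  show "R \<subseteq> insert (Inr ?n) (free w T)"
  proof
    fix r assume r: "r \<in> R"
    show "r \<in> insert (Inr ?n) (free w T)"
    proof (cases "r = Inr ?n")
      case True then show ?thesis by simp
    next
      case False
      have rn: "(r, ?n) \<in> T'" using r by (simp add: R_def)
      then have "(r, ?n) \<in> shifted_cells (w @ [False])" using T'c by blast
      then have row: "is_row w r" using False cells_mem[of r ?n w] by (auto simp: cells_False)
      have unr: "\<forall>b. (r, b) \<in> shifted_cells w - T \<longrightarrow> \<not> (\<exists>r'. (r', b) \<in> T \<and> row_above r' r)"
      proof (intro allI impI notI)
        fix b assume rb: "(r, b) \<in> shifted_cells w - T" and ab: "\<exists>r'. (r', b) \<in> T \<and> row_above r' r"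
        then have bn: "b < ?n" using cells_mem by blast
        then have "(r, b) \<in> shifted_cells (w @ [False]) - T'" using rb by (auto simp: cells_False T_def)
        then show False using T' TT' ab rn bn unfolding is_typeB_tableau_def by blast
      qed
      have dg: "\<forall>b. r = Inr b \<longrightarrow> (Inr b, b) \<in> T"
      proof (intro allI impI)
        fix b assume rb: "r = Inr b"
        then have bn: "b < ?n" "\<not> w ! b" using row by (auto simp: is_row_def)
        then have c: "(Inr b, b) \<in> shifted_cells (w @ [False])" by (auto simp: cells_False mem_cells)
        show "(Inr b, b) \<in> T"
        proof (rule ccontr)
          assume "(Inr b, b) \<notin> T"
          then have "(Inr b, b) \<notin> T'" using bn by (auto simp: T_def)
          then show False using T' c rn rb unfolding is_typeB_tableau_def by blast
        qed
      qed
      show ?thesis using row unr dg by (simp add: free_def)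
    qed
  qed
qed

lemma free_True:
  assumes "T \<subseteq> shifted_cells w"
  shows "free (w @ [True]) T = insert (Inl (length w)) (free w T)"
proof (rule set_eqI)
  fix r
  have nc: "\<And>b. (Inl (length w), b) \<notin> shifted_cells w" using cells_mem not_row_len by blast
  show "r \<in> free (w @ [True]) T \<longleftrightarrow> r \<in> insert (Inl (length w)) (free w T)"
    unfolding free_def cells_True is_row_True using nc by auto
qed

lemma free_False:
  assumes Tc: "T \<subseteq> shifted_cells w" and R: "R \<subseteq> insert (Inr (length w)) (free w T)"
  shows "free (w @ [False]) (T \<union> col (length w) R) =
    {r \<in> free w T. r \<in> R \<or> \<not> (\<exists>r'\<in>R. row_above r' r)} \<union> (if Inr (length w) \<in> R then {Inr (length w)} else {})"
proof (rule set_eqI)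
  fix r
  let ?n = "length w"
  let ?T = "T \<union> col ?n R"
  let ?C = "shifted_cells (w @ [False])"
  have Tlt: "\<And>x b. (x, b) \<in> T \<Longrightarrow> b < ?n \<and> is_row w x" using Tc cells_mem by blast
  have TL: "\<And>x b. b < ?n \<Longrightarrow> (x, b) \<in> ?T \<longleftrightarrow> (x, b) \<in> T" by (auto simp: col_def)
  have TN: "\<And>x. (x, ?n) \<in> ?T \<longleftrightarrow> x \<in> R" by (auto simp: col_def dest: Tlt)
  have CL: "\<And>x b. b < ?n \<Longrightarrow> (x, b) \<in> ?C \<longleftrightarrow> (x, b) \<in> shifted_cells w" by (auto simp: cells_False)
  have CN: "\<And>x. (x, ?n) \<in> ?C \<longleftrightarrow> x = Inr ?n \<or> is_row w x" by (auto simp: cells_False dest: cells_mem)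
  have CG: "\<And>x b. (x, b) \<in> ?C \<Longrightarrow> b \<le> ?n" using cells_mem by fastforce
  have Rr: "\<And>x. x \<in> R \<Longrightarrow> x = Inr ?n \<or> is_row w x" using R by (auto simp: free_def)
  define U' where "U' = (\<forall>b. (r, b) \<in> ?C - ?T \<longrightarrow> \<not> (\<exists>r'. (r', b) \<in> ?T \<and> row_above r' r))"
  define U where "U = (\<forall>b. (r, b) \<in> shifted_cells w - T \<longrightarrow> \<not> (\<exists>r'. (r', b) \<in> T \<and> row_above r' r))"
  have U'eq: "U' \<longleftrightarrow> (\<forall>b<?n. (r, b) \<in> shifted_cells w - T \<longrightarrow> \<not> (\<exists>r'. (r', b) \<in> T \<and> row_above r' r))
      \<and> ((r, ?n) \<in> ?C - ?T \<longrightarrow> \<not> (\<exists>r'\<in>R. row_above r' r))"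
  proof
    assume u: U'
    show "(\<forall>b<?n. (r, b) \<in> shifted_cells w - T \<longrightarrow> \<not> (\<exists>r'. (r', b) \<in> T \<and> row_above r' r))
      \<and> ((r, ?n) \<in> ?C - ?T \<longrightarrow> \<not> (\<exists>r'\<in>R. row_above r' r))"
    proof (intro conjI allI impI)
      fix b assume "b < ?n" "(r, b) \<in> shifted_cells w - T"
      then show "\<not> (\<exists>r'. (r', b) \<in> T \<and> row_above r' r)" using u TL[of b] CL[of b] unfolding U'_def by blast
    next
      assume "(r, ?n) \<in> ?C - ?T"
      then show "\<not> (\<exists>r'\<in>R. row_above r' r)" using u TN unfolding U'_def by blast
    qed
  next
    assume u: "(\<forall>b<?n. (r, b) \<in> shifted_cells w - T \<longrightarrow> \<not> (\<exists>r'. (r', b) \<in> T \<and> row_above r' r))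
      \<and> ((r, ?n) \<in> ?C - ?T \<longrightarrow> \<not> (\<exists>r'\<in>R. row_above r' r))"
    show U' unfolding U'_def
    proof (intro allI impI)
      fix b assume rb: "(r, b) \<in> ?C - ?T"
      then have "b \<le> ?n" using CG by blast
      then show "\<not> (\<exists>r'. (r', b) \<in> ?T \<and> row_above r' r)"
      proof (cases "b < ?n")
        case True
        then show ?thesis using u rb TL[of b] CL[of b] by blast
      next
        case False
        then have "b = ?n" using \<open>b \<le> ?n\<close> by simp
        then show ?thesis using u rb TN by blast
      qed
    qed
  qed
  have Ueq: "U \<longleftrightarrow> (\<forall>b<?n. (r, b) \<in> shifted_cells w - T \<longrightarrow> \<not> (\<exists>r'. (r', b) \<in> T \<and> row_above r' r))"
    unfolding U_def using cells_mem by blast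
  have free'_iff: "r \<in> free (w @ [False]) ?T \<longleftrightarrow> is_row (w @ [False]) r \<and> U' \<and> (\<forall>b. r = Inr b \<longrightarrow> (Inr b, b) \<in> ?T)"
    unfolding free_def U'_def by blast
  have free_iff: "r \<in> free w T \<longleftrightarrow> is_row w r \<and> U \<and> (\<forall>b. r = Inr b \<longrightarrow> (Inr b, b) \<in> T)"
    unfolding free_def U_def by blast
  show "r \<in> free (w @ [False]) ?T \<longleftrightarrow>
    r \<in> {r \<in> free w T. r \<in> R \<or> \<not> (\<exists>r'\<in>R. row_above r' r)} \<union> (if Inr ?n \<in> R then {Inr ?n} else {})"
  proof (cases "r = Inr ?n")
    case True
    have "\<not> (\<exists>r'\<in>R. row_above r' r)"
    proof
      assume "\<exists>r'\<in>R. row_above r' r"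
      then obtain r' where "r' \<in> R" "row_above r' r" by blast
      then show False using Rr[of r'] True by (cases r') (auto simp: is_row_def)
    qed
    then have "U'" unfolding U'eq using True Tlt by (auto simp: not_row_len dest: cells_mem)
    moreover have "r \<notin> free w T" using True not_row_len by (auto simp: free_def)
    ultimately show ?thesis using True free'_iff TN by (auto simp: is_row_False)
  next
    case False
    show ?thesis
    proof (cases "is_row w r")
      case row: True
      have diag: "(\<forall>b. r = Inr b \<longrightarrow> (Inr b, b) \<in> ?T) \<longleftrightarrow> (\<forall>b. r = Inr b \<longrightarrow> (Inr b, b) \<in> T)"
        using row TL by (auto simp: is_row_def)
      have cn: "(r, ?n) \<in> ?C - ?T \<longleftrightarrow> r \<notin> R" using CN row TN by blast
      have "r \<in> free (w @ [False]) ?T \<longleftrightarrow> r \<in> free w T \<and> (r \<in> R \<or> \<not> (\<exists>r'\<in>R. row_above r' r))"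
        unfolding free'_iff free_iff diag U'eq Ueq cn using row is_row_False by blast
      then show ?thesis using False by auto
    next
      case nrow: False
      then show ?thesis using False free'_iff free_iff is_row_False by auto
    qed
  qed
qed

lemma finite_typeB: "finite (typeB_tableaux n)"
proof -
  let ?B = "(Inl ` {..<n} \<union> Inr ` {..<n}) \<times> {..<n} :: bcell set"
  have "typeB_tableaux n \<subseteq> {w. set w \<subseteq> UNIV \<and> length w = n} \<times> Pow ?B"
  proof
    fix x assume x: "x \<in> typeB_tableaux n"
    obtain w T where xw: "x = (w, T)" by (cases x)
    have "length w = n" "T \<subseteq> shifted_cells w" using x xw by (auto simp: typeB_tableaux_def is_typeB_tableau_def)
    moreover have "shifted_cells w \<subseteq> ?B"
    proof
      fix c assume "c \<in> shifted_cells w"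
      then show "c \<in> ?B" using \<open>length w = n\<close> by (cases c) (auto simp: shifted_cells_def)
    qed
    ultimately show "x \<in> {w. set w \<subseteq> UNIV \<and> length w = n} \<times> Pow ?B" using xw by auto
  qed
  moreover have "finite ({w. set w \<subseteq> (UNIV :: bool set) \<and> length w = n} \<times> Pow ?B)"
    by (intro finite_cartesian_product finite_lists_length_eq) auto
  ultimately show ?thesis by (rule finite_subset)
qed

lemma finite_free: "finite (free w T)"
proof -
  have "free w T \<subseteq> Inl ` {..<length w} \<union> Inr ` {..<length w}"
  proof
    fix r assume "r \<in> free w T"
    then have "is_row w r" by (simp add: free_def)
    then show "r \<in> Inl ` {..<length w} \<union> Inr ` {..<length w}" by (cases r) (auto simp: is_row_def)
  qed
  then show ?thesis by (rule finite_subset) auto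
qed

definition Rs :: "nat \<Rightarrow> bool list \<times> bcell set \<Rightarrow> brow set set" where
  "Rs n x = {R. R \<subseteq> insert (Inr n) (free (fst x) (snd x)) \<and> R \<noteq> {}}"

lemma finite_Rs: "finite (Rs n x)"
proof -
  have "Rs n x \<subseteq> Pow (insert (Inr n) (free (fst x) (snd x)))" by (auto simp: Rs_def)
  moreover have "finite (Pow (insert (Inr n) (free (fst x) (snd x))))" using finite_free by simp
  ultimately show ?thesis by (rule finite_subset)
qed

lemma typeB_Suc: "typeB_tableaux (Suc n) =
   (\<lambda>(w, T). (w @ [True], T)) ` typeB_tableaux n \<union>
   (\<lambda>((w, T), R). (w @ [False], T \<union> col n R)) ` (SIGMA x:typeB_tableaux n. Rs n x)"
proof (rule set_eqI)
  fix x :: "bool list \<times> bcell set"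
  obtain w' T' where x: "x = (w', T')" by (cases x)
  show "x \<in> typeB_tableaux (Suc n) \<longleftrightarrow> x \<in> (\<lambda>(w, T). (w @ [True], T)) ` typeB_tableaux n \<union>
   (\<lambda>((w, T), R). (w @ [False], T \<union> col n R)) ` (SIGMA x:typeB_tableaux n. Rs n x)"
  proof
    assume a: "x \<in> typeB_tableaux (Suc n)"
    then have len: "length w' = Suc n" and tb: "is_typeB_tableau w' T'" using x by (auto simp: typeB_tableaux_def)
    obtain w c where wc: "w' = w @ [c]" using len by (metis append_butlast_last_id length_0_conv nat.distinct(1))
    have lw: "length w = n" using len wc by simp
    show "x \<in> (\<lambda>(w, T). (w @ [True], T)) ` typeB_tableaux n \<union>
     (\<lambda>((w, T), R). (w @ [False], T \<union> col n R)) ` (SIGMA x:typeB_tableaux n. Rs n x)"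
    proof (cases c)
      case True
      then have "(w, T') \<in> typeB_tableaux n" using tb wc lw typeB_True by (auto simp: typeB_tableaux_def)
      then show ?thesis using x wc True by force
    next
      case False
      define T where "T = {c \<in> T'. snd c < length w}"
      define R where "R = {r. (r, length w) \<in> T'}"
      have tbF: "is_typeB_tableau (w @ [False]) T'" using tb wc False by simp
      note e = typeB_False_elim[OF tbF, folded T_def R_def]
      have "((w, T), R) \<in> (SIGMA x:typeB_tableaux n. Rs n x)"
        using e lw by (auto simp: typeB_tableaux_def Rs_def)
      moreover have "x = (\<lambda>((w, T), R). (w @ [False], T \<union> col n R)) ((w, T), R)"
        using x wc False e(1) lw by simp
      ultimately show ?thesis by blast
    qed
  next
    assume "x \<in> (\<lambda>(w, T). (w @ [True], T)) ` typeB_tableaux n \<union>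
     (\<lambda>((w, T), R). (w @ [False], T \<union> col n R)) ` (SIGMA x:typeB_tableaux n. Rs n x)"
    then show "x \<in> typeB_tableaux (Suc n)"
    proof
      assume "x \<in> (\<lambda>(w, T). (w @ [True], T)) ` typeB_tableaux n"
      then show ?thesis using typeB_True by (auto simp: typeB_tableaux_def)
    next
      assume "x \<in> (\<lambda>((w, T), R). (w @ [False], T \<union> col n R)) ` (SIGMA x:typeB_tableaux n. Rs n x)"
      then obtain p R where pR: "p \<in> typeB_tableaux n" "R \<in> Rs n p"
         "x = (\<lambda>((w, T), R). (w @ [False], T \<union> col n R)) (p, R)" by blast
      obtain w T where p: "p = (w, T)" by (cases p)
      have "x = (w @ [False], T \<union> col n R)" "length w = n" "is_typeB_tableau w T"
        "R \<subseteq> insert (Inr n) (free w T)" "R \<noteq> {}"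
        using pR p by (auto simp: typeB_tableaux_def Rs_def)
      then show ?thesis using typeB_False_intro[of w T R] by (auto simp: typeB_tableaux_def)
    qed
  qed
qed

lemma sum_typeB_Suc:
  fixes f :: "bool list \<times> bcell set \<Rightarrow> real"
  shows "sum f (typeB_tableaux (Suc n)) =
    (\<Sum>x\<in>typeB_tableaux n. f (fst x @ [True], snd x) + (\<Sum>R\<in>Rs n x. f (fst x @ [False], snd x \<union> col n R)))"
proof -
  let ?A = "(\<lambda>(w, T). (w @ [True], T)) ` typeB_tableaux n"
  let ?g = "\<lambda>((w, T), R). (w @ [False], T \<union> col n R)"
  let ?S = "SIGMA x:typeB_tableaux n. Rs n x"
  have fA: "finite ?A" using finite_typeB by simp
  have fS: "finite ?S" using finite_typeB finite_Rs by (intro finite_SigmaI) auto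
  have disj: "?A \<inter> ?g ` ?S = {}" by auto
  have inj1: "inj_on (\<lambda>(w, T). (w @ [True], T)) (typeB_tableaux n)"
    by (auto simp: inj_on_def)
  have inj2: "inj_on ?g ?S"
  proof (rule inj_onI)
    fix a b assume a: "a \<in> ?S" and b: "b \<in> ?S" and e: "?g a = ?g b"
    obtain w1 T1 R1 where a': "a = ((w1, T1), R1)" by (metis prod.collapse)
    obtain w2 T2 R2 where b': "b = ((w2, T2), R2)" by (metis prod.collapse)
    have l: "length w1 = n" "length w2 = n" "T1 \<subseteq> shifted_cells w1" "T2 \<subseteq> shifted_cells w2"
      using a b a' b' by (auto simp: typeB_tableaux_def is_typeB_tableau_def)
    have w: "w1 = w2" using e a' b' by simp
    have U: "T1 \<union> col n R1 = T2 \<union> col n R2" using e a' b' by simp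
    have split: "\<And>T R w. length w = n \<Longrightarrow> T \<subseteq> shifted_cells w \<Longrightarrow>
        T = {c \<in> T \<union> col n R. snd c < n} \<and> R = {r. (r, n) \<in> T \<union> col n R}"
    proof -
      fix T R and w :: "bool list" assume "length w = n" "T \<subseteq> shifted_cells w"
      then have "\<And>r b. (r, b) \<in> T \<Longrightarrow> b < n" using cells_mem by blast
      then show "T = {c \<in> T \<union> col n R. snd c < n} \<and> R = {r. (r, n) \<in> T \<union> col n R}"
        by (auto simp: col_def)
    qed
    have "T1 = T2" using split[OF l(1,3), of R1] split[OF l(2,4), of R2] U by metis
    moreover have "R1 = R2" using split[OF l(1,3), of R1] split[OF l(2,4), of R2] U by metis
    ultimately show "a = b" using a' b' w by simp
  qed
  have "sum f (typeB_tableaux (Suc n)) = sum f ?A + sum f (?g ` ?S)"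
    unfolding typeB_Suc using fA fS disj by (intro sum.union_disjoint) auto
  also have "sum f ?A = sum (f \<circ> (\<lambda>(w, T). (w @ [True], T))) (typeB_tableaux n)"
    by (rule sum.reindex[OF inj1])
  also have "\<dots> = (\<Sum>x\<in>typeB_tableaux n. f (fst x @ [True], snd x))"
    by (simp add: case_prod_beta comp_def)
  also have "sum f (?g ` ?S) = (\<Sum>p\<in>?S. f (?g p))"
    using inj2 by (simp add: sum.reindex)
  also have "\<dots> = (\<Sum>(x, R)\<in>?S. f (fst x @ [False], snd x \<union> col n R))"
    by (rule sum.cong) (auto simp: case_prod_beta)
  also have "\<dots> = (\<Sum>x\<in>typeB_tableaux n. \<Sum>R\<in>Rs n x. f (fst x @ [False], snd x \<union> col n R))"
    by (rule sum.Sigma[symmetric]) (auto simp: finite_typeB finite_Rs)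
  finally show ?thesis by (simp add: sum.distrib)
qed

fun key :: "brow \<Rightarrow> int" where
  "key (Inl a) = int a"
| "key (Inr b) = - int b - 1"

lemma row_above_key: "row_above r s \<longleftrightarrow> key r < key s"
  by (cases r; cases s) auto

lemma key_inj: "key r = key s \<Longrightarrow> r = s"
  by (cases r; cases s) auto

lemma sum_pow_card:
  fixes y :: real
  assumes "finite F"
  shows "(\<Sum>R\<in>Pow F. y ^ card R) = (1 + y) ^ card F"
  using assms
proof (induction F rule: finite_induct)
  case empty then show ?case by simp
next
  case (insert a F)
  have inj: "inj_on (insert a) (Pow F)" using insert(2) by (auto simp: inj_on_def)
  have disj: "Pow F \<inter> insert a ` Pow F = {}" using insert(2) by auto
  have "(\<Sum>R\<in>Pow (insert a F). y ^ card R) = (\<Sum>R\<in>Pow F. y ^ card R) + (\<Sum>R\<in>insert a ` Pow F. y ^ card R)"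
    unfolding Pow_insert using insert(1) disj by (intro sum.union_disjoint) auto
  also have "(\<Sum>R\<in>insert a ` Pow F. y ^ card R) = (\<Sum>R\<in>Pow F. y ^ card (insert a R))"
    using inj by (simp add: sum.reindex)
  also have "\<dots> = (\<Sum>R\<in>Pow F. y * y ^ card R)"
  proof (rule sum.cong)
    fix R assume "R \<in> Pow F"
    then have "finite R" "a \<notin> R" using insert(1,2) finite_subset by auto
    then show "y ^ card (insert a R) = y * y ^ card R" by simp
  qed simp
  finally show ?case using insert(1,2,3) by (simp add: sum_distrib_left[symmetric] algebra_simps)
qed

definition cnt :: "brow set \<Rightarrow> brow set \<Rightarrow> nat" where
  "cnt F R = card {r \<in> F. r \<in> R \<or> \<not> (\<exists>r'\<in>R. row_above r' r)}"

lemma sum_cnt: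
  fixes y :: real
  assumes "finite F"
  shows "(\<Sum>R\<in>{R. R \<subseteq> F \<and> R \<noteq> {}}. y ^ cnt F R) = y * (1 + y) ^ card F - y ^ (card F + 1)"
  using assms
proof (induction F rule: finite_ranking_induct[where f = key])
  case empty then show ?case by simp
next
  case (insert m S)
  show ?case
  proof (cases "m \<in> S")
    case True
    then show ?thesis using insert by (simp add: insert_absorb)
  next
    case mS: False
    have above: "\<And>r. r \<in> S \<Longrightarrow> row_above r m"
    proof -
      fix r assume r: "r \<in> S"
      then have "key r \<le> key m" by (rule insert(2))
      moreover have "key r \<noteq> key m" using r mS key_inj by blast
      ultimately show "row_above r m" by (simp add: row_above_key)
    qed
    let ?N = "\<lambda>F. {R. R \<subseteq> F \<and> R \<noteq> {}}"
    have split: "?N (insert m S) = ?N S \<union> insert m ` Pow S"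
    proof (rule set_eqI)
      fix R
      show "R \<in> ?N (insert m S) \<longleftrightarrow> R \<in> ?N S \<union> insert m ` Pow S"
      proof
        assume R: "R \<in> ?N (insert m S)"
        show "R \<in> ?N S \<union> insert m ` Pow S"
        proof (cases "m \<in> R")
          case True
          then have "R = insert m (R - {m})" "R - {m} \<in> Pow S" using R by auto
          then show ?thesis by blast
        next
          case False
          then show ?thesis using R by blast
        qed
      next
        assume "R \<in> ?N S \<union> insert m ` Pow S"
        then show "R \<in> ?N (insert m S)" by blast
      qed
    qed
    have disj: "?N S \<inter> insert m ` Pow S = {}" using mS by auto
    have inj: "inj_on (insert m) (Pow S)" using mS by (auto simp: inj_on_def)
    have "?N S \<subseteq> Pow S" by blast
    then have fN: "finite (?N S)" using insert(1) by (simp add: finite_subset)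
    have c1: "\<And>R. R \<in> ?N S \<Longrightarrow> cnt (insert m S) R = cnt S R"
    proof -
      fix R assume R: "R \<in> ?N S"
      then have "\<exists>r'\<in>R. row_above r' m" using above by blast
      moreover have "m \<notin> R" using R mS by blast
      ultimately have "{r \<in> insert m S. r \<in> R \<or> \<not> (\<exists>r'\<in>R. row_above r' r)} = {r \<in> S. r \<in> R \<or> \<not> (\<exists>r'\<in>R. row_above r' r)}"
        by blast
      then show "cnt (insert m S) R = cnt S R" by (simp add: cnt_def)
    qed
    have nm: "\<And>r. r \<in> S \<Longrightarrow> \<not> row_above m r"
    proof -
      fix r assume "r \<in> S"
      then have "key r < key m" using above by (simp add: row_above_key)
      then show "\<not> row_above m r" by (simp add: row_above_key)
    qed
    have c2: "cnt (insert m S) (insert m {}) = card S + 1"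
    proof -
      have "{r \<in> insert m S. r \<in> {m} \<or> \<not> (\<exists>r'\<in>{m}. row_above r' r)} = insert m S"
        using nm by auto
      then show ?thesis using insert(1) mS by (simp add: cnt_def)
    qed
    have c3: "\<And>R. R \<in> ?N S \<Longrightarrow> cnt (insert m S) (insert m R) = cnt S R + 1"
    proof -
      fix R assume R: "R \<in> ?N S"
      have "{r \<in> insert m S. r \<in> insert m R \<or> \<not> (\<exists>r'\<in>insert m R. row_above r' r)}
          = insert m {r \<in> S. r \<in> R \<or> \<not> (\<exists>r'\<in>R. row_above r' r)}"
        using nm by blast
      moreover have "finite {r \<in> S. r \<in> R \<or> \<not> (\<exists>r'\<in>R. row_above r' r)}" using insert(1) by simp
      ultimately show "cnt (insert m S) (insert m R) = cnt S R + 1" using mS by (simp add: cnt_def)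
    qed
    have "(\<Sum>R\<in>?N (insert m S). y ^ cnt (insert m S) R)
        = (\<Sum>R\<in>?N S. y ^ cnt (insert m S) R) + (\<Sum>R\<in>insert m ` Pow S. y ^ cnt (insert m S) R)"
      unfolding split using fN insert(1) disj by (intro sum.union_disjoint) auto
    also have "(\<Sum>R\<in>?N S. y ^ cnt (insert m S) R) = (\<Sum>R\<in>?N S. y ^ cnt S R)"
      using c1 by simp
    also have "(\<Sum>R\<in>insert m ` Pow S. y ^ cnt (insert m S) R) = (\<Sum>R\<in>Pow S. y ^ cnt (insert m S) (insert m R))"
      using inj by (simp add: sum.reindex)
    also have "Pow S = insert {} (?N S)" by blast
    also have "(\<Sum>R\<in>insert {} (?N S). y ^ cnt (insert m S) (insert m R))
        = y ^ cnt (insert m S) (insert m {}) + (\<Sum>R\<in>?N S. y ^ cnt (insert m S) (insert m R))"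
      using fN by (subst sum.insert) auto
    also have "(\<Sum>R\<in>?N S. y ^ cnt (insert m S) (insert m R)) = (\<Sum>R\<in>?N S. y * y ^ cnt S R)"
      using c3 by simp
    finally have eq: "(\<Sum>R\<in>?N (insert m S). y ^ cnt (insert m S) R)
        = (1 + y) * (\<Sum>R\<in>?N S. y ^ cnt S R) + y ^ (card S + 1)"
      using c2 by (simp add: sum_distrib_left[symmetric] algebra_simps)
    show ?thesis unfolding eq insert(3) using insert(1) mS by (simp add: algebra_simps)
  qed
qed

lemma split_N: "{R. R \<subseteq> insert m S \<and> R \<noteq> {}} = {R. R \<subseteq> S \<and> R \<noteq> {}} \<union> insert m ` Pow S"
proof (rule set_eqI)
  fix R
  show "R \<in> {R. R \<subseteq> insert m S \<and> R \<noteq> {}} \<longleftrightarrow> R \<in> {R. R \<subseteq> S \<and> R \<noteq> {}} \<union> insert m ` Pow S"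
  proof
    assume R: "R \<in> {R. R \<subseteq> insert m S \<and> R \<noteq> {}}"
    show "R \<in> {R. R \<subseteq> S \<and> R \<noteq> {}} \<union> insert m ` Pow S"
    proof (cases "m \<in> R")
      case True
      then have "R = insert m (R - {m})" "R - {m} \<in> Pow S" using R by auto
      then show ?thesis by blast
    next
      case False
      then show ?thesis using R by blast
    qed
  next
    assume "R \<in> {R. R \<subseteq> S \<and> R \<noteq> {}} \<union> insert m ` Pow S"
    then show "R \<in> {R. R \<subseteq> insert m S \<and> R \<noteq> {}}" by blast
  qed
qed

lemma inner_sum:
  fixes y :: real
  assumes x: "x \<in> typeB_tableaux n"
  shows "(\<Sum>R\<in>Rs n x. y ^ card (free (fst x @ [False]) (snd x \<union> col n R)))
     = 2 * y * (1 + y) ^ card (free (fst x) (snd x)) - y ^ (card (free (fst x) (snd x)) + 1)"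
proof -
  obtain w T where xw: "x = (w, T)" by (cases x)
  have lw: "length w = n" and tb: "is_typeB_tableau w T" using x xw by (auto simp: typeB_tableaux_def)
  have Tc: "T \<subseteq> shifted_cells w" using tb by (simp add: is_typeB_tableau_def)
  let ?F = "free w T"
  have fF: "finite ?F" by (rule finite_free)
  have nF: "Inr n \<notin> ?F" using lw not_row_len by (auto simp: free_def)
  have ab: "\<And>r. r \<in> ?F \<Longrightarrow> row_above (Inr n) r"
  proof -
    fix r assume "r \<in> ?F"
    then have "is_row w r" by (simp add: free_def)
    then show "row_above (Inr n) r" using lw by (cases r) (auto simp: is_row_def)
  qed
  let ?N = "{R. R \<subseteq> ?F \<and> R \<noteq> {}}"
  have RsEq: "Rs n x = ?N \<union> insert (Inr n) ` Pow ?F"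
    unfolding Rs_def xw by (simp add: split_N)
  have disj: "?N \<inter> insert (Inr n) ` Pow ?F = {}" using nF by auto
  have inj: "inj_on (insert (Inr n)) (Pow ?F)"
  proof (rule inj_onI)
    fix A B assume "A \<in> Pow ?F" "B \<in> Pow ?F" "insert (Inr n) A = insert (Inr n) B"
    then show "A = B" using nF insert_ident[of "Inr n" A B] by blast
  qed
  have "?N \<subseteq> Pow ?F" by blast
  then have fN: "finite ?N" using fF by (simp add: finite_subset)
  let ?h = "\<lambda>R. y ^ card (free (w @ [False]) (T \<union> col n R))"
  have h1: "\<And>R. R \<in> ?N \<Longrightarrow> ?h R = y ^ cnt ?F R"
  proof -
    fix R assume R: "R \<in> ?N"
    then have "Inr n \<notin> R" using nF by blast
    moreover have "R \<subseteq> insert (Inr (length w)) ?F" using R by blast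
    ultimately show "?h R = y ^ cnt ?F R"
      using free_False[OF Tc] lw by (simp add: cnt_def)
  qed
  have h2: "\<And>R. R \<in> Pow ?F \<Longrightarrow> ?h (insert (Inr n) R) = y * y ^ card R"
  proof -
    fix R assume R: "R \<in> Pow ?F"
    have sub: "insert (Inr n) R \<subseteq> insert (Inr (length w)) ?F" using R lw by blast
    have "{r \<in> ?F. r \<in> insert (Inr n) R \<or> \<not> (\<exists>r'\<in>insert (Inr n) R. row_above r' r)} = R"
      using R ab nF by blast
    then have "free (w @ [False]) (T \<union> col n (insert (Inr n) R)) = insert (Inr n) R"
      using free_False[OF Tc sub] lw by auto
    moreover have "finite R" "Inr n \<notin> R" using R fF nF finite_subset by auto
    ultimately show "?h (insert (Inr n) R) = y * y ^ card R" by simp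
  qed
  have "(\<Sum>R\<in>Rs n x. ?h R) = (\<Sum>R\<in>?N. ?h R) + (\<Sum>R\<in>insert (Inr n) ` Pow ?F. ?h R)"
    unfolding RsEq using fN fF disj by (intro sum.union_disjoint) auto
  also have "(\<Sum>R\<in>?N. ?h R) = (\<Sum>R\<in>?N. y ^ cnt ?F R)" using h1 by simp
  also have "\<dots> = y * (1 + y) ^ card ?F - y ^ (card ?F + 1)" using sum_cnt[OF fF] by simp
  also have "(\<Sum>R\<in>insert (Inr n) ` Pow ?F. ?h R) = (\<Sum>R\<in>Pow ?F. ?h (insert (Inr n) R))"
    using inj by (simp add: sum.reindex)
  also have "\<dots> = (\<Sum>R\<in>Pow ?F. y * y ^ card R)" using h2 by simp
  also have "\<dots> = y * (1 + y) ^ card ?F" using sum_pow_card[OF fF] by (simp add: sum_distrib_left[symmetric])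
  finally show ?thesis using xw by simp
qed

definition Agf :: "nat \<Rightarrow> real \<Rightarrow> real" where
  "Agf n y = (\<Sum>x\<in>typeB_tableaux n. y ^ card (free (fst x) (snd x)))"

definition Cgf :: "nat \<Rightarrow> real \<Rightarrow> real" where
  "Cgf n y = (\<Sum>x\<in>typeB_tableaux n. real (south_steps (fst x)) * y ^ card (free (fst x) (snd x)))"

lemma free_True_card:
  assumes "x \<in> typeB_tableaux n"
  shows "card (free (fst x @ [True]) (snd x)) = card (free (fst x) (snd x)) + 1"
proof -
  obtain w T where xw: "x = (w, T)" by (cases x)
  have "T \<subseteq> shifted_cells w" using assms xw by (auto simp: typeB_tableaux_def is_typeB_tableau_def)
  moreover have "Inl (length w) \<notin> free w T" using not_row_len by (auto simp: free_def)
  ultimately show ?thesis using xw free_True finite_free by simp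
qed

lemma south_snoc: "south_steps (w @ [b]) = south_steps w + (if b then 1 else 0)"
  by (simp add: south_steps_def)

lemma Agf_Suc: "Agf (Suc n) y = 2 * y * Agf n (1 + y)"
proof -
  have "Agf (Suc n) y = (\<Sum>x\<in>typeB_tableaux n. y ^ (card (free (fst x) (snd x)) + 1) +
       (2 * y * (1 + y) ^ card (free (fst x) (snd x)) - y ^ (card (free (fst x) (snd x)) + 1)))"
    unfolding Agf_def sum_typeB_Suc by (rule sum.cong) (simp_all add: inner_sum free_True_card)
  also have "\<dots> = (\<Sum>x\<in>typeB_tableaux n. 2 * y * (1 + y) ^ card (free (fst x) (snd x)))" by simp
  also have "\<dots> = 2 * y * Agf n (1 + y)" by (simp add: Agf_def sum_distrib_left)
  finally show ?thesis .
qed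

lemma Cgf_Suc: "Cgf (Suc n) y = 2 * y * Cgf n (1 + y) + y * Agf n y"
proof -
  have "Cgf (Suc n) y = (\<Sum>x\<in>typeB_tableaux n.
       (real (south_steps (fst x)) + 1) * y ^ (card (free (fst x) (snd x)) + 1) +
       real (south_steps (fst x)) * (2 * y * (1 + y) ^ card (free (fst x) (snd x)) - y ^ (card (free (fst x) (snd x)) + 1)))"
    unfolding Cgf_def sum_typeB_Suc
    by (rule sum.cong) (simp_all add: inner_sum free_True_card south_snoc sum_distrib_left[symmetric])
  also have "\<dots> = (\<Sum>x\<in>typeB_tableaux n. 2 * y * (real (south_steps (fst x)) * (1 + y) ^ card (free (fst x) (snd x)))
       + y * y ^ card (free (fst x) (snd x)))"
    by (rule sum.cong) (simp_all add: algebra_simps)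
  also have "\<dots> = 2 * y * Cgf n (1 + y) + y * Agf n y"
    by (simp add: Cgf_def Agf_def sum.distrib sum_distrib_left)
  finally show ?thesis .
qed

lemma typeB_0: "typeB_tableaux 0 = {([], {})}"
proof -
  have "shifted_cells [] = {}" by (simp add: shifted_cells_def)
  then show ?thesis by (auto simp: typeB_tableaux_def is_typeB_tableau_def)
qed

lemma Agf_0: "Agf 0 y = 1"
proof -
  have "free [] {} = {}" by (auto simp: free_def is_row_def split: sum.splits)
  then show ?thesis by (simp add: Agf_def typeB_0)
qed

lemma Cgf_0: "Cgf 0 y = 0"
  by (simp add: Cgf_def typeB_0 south_steps_def)

lemma Agf_closed: "Agf n y = 2 ^ n * pochhammer y n"
proof (induction n arbitrary: y)
  case 0 then show ?case by (simp add: Agf_0)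
next
  case (Suc n)
  show ?case unfolding Agf_Suc Suc pochhammer_rec by (simp add: add.commute)
qed

lemma Cgf_closed: "4 * Cgf n y = 2 ^ n * real n * (2 * y + real n - 1) * pochhammer y (n - 1)"
proof (induction n arbitrary: y)
  case 0 then show ?case by (simp add: Cgf_0)
next
  case (Suc n)
  have "4 * Cgf (Suc n) y = 2 * y * (4 * Cgf n (1 + y)) + 4 * y * Agf n y"
    unfolding Cgf_Suc by (simp add: algebra_simps)
  also have "\<dots> = 2 * y * (2 ^ n * real n * (2 * (1 + y) + real n - 1) * pochhammer (1 + y) (n - 1))
      + 4 * y * (2 ^ n * pochhammer y n)"
    unfolding Suc Agf_closed ..
  also have "\<dots> = 2 ^ Suc n * real (Suc n) * (2 * y + real (Suc n) - 1) * pochhammer y (Suc n - 1)"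
  proof (cases n)
    case 0 then show ?thesis by simp
  next
    case (Suc m)
    have p: "pochhammer y (Suc m) = y * pochhammer (1 + y) m" unfolding pochhammer_rec by (simp add: add.commute)
    show ?thesis unfolding Suc by (simp add: p algebra_simps)
  qed
  finally show ?case .
qed

theorem mainTheorem4:
  fixes n :: nat
  assumes "n \<ge> 1"
  shows "measure_pmf.expectation (pmf_of_set (typeB_tableaux n))
           (\<lambda>(w, T). real (south_steps w)) = (real n + 1) / 4"
proof -
  let ?S = "typeB_tableaux n"
  have fS: "finite ?S" by (rule finite_typeB)
  have cardS: "real (card ?S) = Agf n 1" by (simp add: Agf_def)
  have sumS: "(\<Sum>x\<in>?S. (\<lambda>(w, T). real (south_steps w)) x) = Cgf n 1"
    by (simp add: Cgf_def case_prod_beta)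
  have A1: "Agf n 1 = 2 ^ n * fact n" by (simp add: Agf_closed pochhammer_fact)
  have C1: "4 * Cgf n 1 = 2 ^ n * real n * (real n + 1) * fact (n - 1)"
    using Cgf_closed[of n 1] by (simp add: pochhammer_fact)
  have "Agf n 1 > 0" unfolding A1 by simp
  then have ne: "?S \<noteq> {}" using cardS by auto
  obtain m where m: "n = Suc m" using assms by (cases n) auto
  have "measure_pmf.expectation (pmf_of_set ?S) (\<lambda>(w, T). real (south_steps w))
      = (\<Sum>x\<in>?S. (\<lambda>(w, T). real (south_steps w)) x) / real (card ?S)"
    using ne fS by (rule integral_pmf_of_set)
  also have "\<dots> = Cgf n 1 / Agf n 1" unfolding sumS cardS ..
  also have "\<dots> = (real n + 1) / 4"
  proof -
    have "Cgf n 1 = 2 ^ n * real n * (real n + 1) * fact (n - 1) / 4" using C1 by simp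
    moreover have "(fact n :: real) = real n * fact (n - 1)" using m by simp
    then have "Agf n 1 = 2 ^ n * real n * fact (n - 1)" using A1 by simp
    moreover have "(2::real) ^ n * real n * fact (n - 1) \<noteq> 0" using m by simp
    ultimately show ?thesis by (simp add: field_simps)
  qed
  finally show ?thesis .
qed

end
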